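(* Let $p$ be a prime, $A\in \mathbb{Z}^{m\times n}$, $b\in \mathbb{Z}^m$. If $\{x:Ax=b\}$ contains a $p$-adic point, then the $p$-adic points of $\{x:Ax=b\}$ form a dense subset of it. In particular, a nonempty rational polyhedron contains a $p$-adic point if, and only if, its affine hull contains a $p$-adic point.
   Context: A $p$-adic rational is a number $a/p^k$ with $a,k\in\mathbb{Z}$, $k\ge0$; a vector is $p$-adic if all entries are $p$-adic rationals. *)

theory Defs
  imports "HOL-Analysis.Analysis"
begin

definition padic_rat :: "nat \<Rightarrow> real \<Rightarrow> bool" where
  "padic_rat p r \<longleftrightarrow> (\<exists>(a::int) (k::nat). r = of_int a / (of_nat p) ^ k)"

definition padic_vec :: "nat \<Rightarrow> real ^ 'n \<Rightarrow> bool" where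
  "padic_vec p x \<longleftrightarrow> (\<forall>i. padic_rat p (x $ i))"

definition int_mat_to_real :: "int ^ 'n ^ 'm \<Rightarrow> real ^ 'n ^ 'm" where
  "int_mat_to_real A = (\<chi> i j. of_int (A $ i $ j))"

definition int_vec_to_real :: "int ^ 'm \<Rightarrow> real ^ 'm" where
  "int_vec_to_real b = (\<chi> i. of_int (b $ i))"

definition polyhedron :: "real ^ 'n ^ 'k \<Rightarrow> real ^ 'k \<Rightarrow> (real ^ 'n) set" where
  "polyhedron C d = {x. \<forall>i. (C *v x) $ i \<le> d $ i}"

end

theory Submission
  imports Defs
begin

definition ratv :: "real ^ 'n \<Rightarrow> bool" where
  "ratv x \<longleftrightarrow> (\<forall>i. x $ i \<in> \<rat>)"

lemma padic_int: "padic_rat p (of_int a)"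
  unfolding padic_rat_def by (rule exI[of _ a], rule exI[of _ 0]) simp

lemma padic_add:
  assumes "p > 0" "padic_rat p x" "padic_rat p y" shows "padic_rat p (x + y)"
proof -
  obtain a k b l where x: "x = of_int a / (of_nat p)^k" and y: "y = of_int b / (of_nat p)^l"
    using assms unfolding padic_rat_def by blast
  have "x + y = of_int (a * int p ^ l + b * int p ^ k) / (of_nat p)^(k+l)"
    using assms(1) by (simp add: x y field_simps power_add)
  then show ?thesis unfolding padic_rat_def by blast
qed

lemma padic_mult:
  assumes "padic_rat p x" "padic_rat p y" shows "padic_rat p (x * y)"
proof -
  obtain a k b l where x: "x = of_int a / (of_nat p)^k" and y: "y = of_int b / (of_nat p)^l"
    using assms unfolding padic_rat_def by blast
  have "x * y = of_int (a * b) / (of_nat p)^(k+l)"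
    by (simp add: x y power_add)
  then show ?thesis unfolding padic_rat_def by blast
qed

lemma padic_dense:
  assumes "p \<ge> 2" "e > 0" shows "\<exists>t. padic_rat p t \<and> \<bar>t - r\<bar> < e"
proof -
  have "1 < real p" using assms by simp
  then obtain k where k: "1 / e < real p ^ k" using real_arch_pow by blast
  define q where "q = real p ^ k"
  have q0: "q > 0" using assms by (simp add: q_def)
  have qe: "1 / q < e" using k q0 assms(2) unfolding q_def[symmetric]
    by (simp add: field_simps)
  define a where "a = \<lfloor>r * q\<rfloor>"
  have "of_int a \<le> r * q" "r * q < of_int a + 1" unfolding a_def by linarith+
  hence h: "\<bar>of_int a - r * q\<bar> \<le> 1" by linarith
  have "of_int a / q - r = (of_int a - r * q) / q" using q0 by (simp add: field_simps)
  hence "\<bar>of_int a / q - r\<bar> = \<bar>of_int a - r * q\<bar> / q" using q0 by simp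
  hence "\<bar>of_int a / q - r\<bar> \<le> 1 / q" using h q0 by (simp add: divide_right_mono)
  moreover have "padic_rat p (of_int a / q)" unfolding padic_rat_def q_def by auto
  ultimately show ?thesis using qe by fastforce
qed

lemma padic_vec_dense:
  fixes x :: "real ^ 'n"
  assumes "p \<ge> 2" "e > 0" shows "\<exists>z. padic_vec p z \<and> dist z x < e"
proof -
  define c where "c = e / (2 * real CARD('n))"
  have c0: "c > 0" using assms by (simp add: c_def)
  have "\<forall>i. \<exists>t. padic_rat p t \<and> \<bar>t - x$i\<bar> < c" using padic_dense[OF assms(1) c0] by blast
  then obtain f where f: "\<And>i. padic_rat p (f i) \<and> \<bar>f i - x$i\<bar> < c" by metis
  define z where "z = (\<chi> i. f i)"
  have "dist z x = norm (z - x)" by (simp add: dist_norm)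
  also have "\<dots> \<le> (\<Sum>i\<in>UNIV. \<bar>(z - x)$i\<bar>)" by (rule norm_le_l1_cart)
  also have "\<dots> \<le> (\<Sum>i\<in>(UNIV::'n set). c)"
    by (rule sum_mono) (use f in \<open>auto simp: z_def less_imp_le\<close>)
  also have "\<dots> = e / 2" by (simp add: c_def)
  also have "\<dots> < e" using assms by simp
  finally have "dist z x < e" .
  moreover have "padic_vec p z" using f by (simp add: padic_vec_def z_def)
  ultimately show ?thesis by blast
qed

lemma inner_rat: "ratv x \<Longrightarrow> ratv y \<Longrightarrow> (x :: real^'n) \<bullet> y \<in> \<rat>"
  unfolding ratv_def inner_vec_def by (auto intro!: Rats_sum Rats_mult)

lemma ratv_diff: "ratv x \<Longrightarrow> ratv y \<Longrightarrow> ratv (x - y)"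
  unfolding ratv_def by auto

lemma ratv_sum: "(\<And>b. b \<in> B \<Longrightarrow> ratv (f b)) \<Longrightarrow> ratv (sum f B)"
  unfolding ratv_def by (auto simp: sum_component intro!: Rats_sum)

lemma ratv_scale: "c \<in> \<rat> \<Longrightarrow> ratv x \<Longrightarrow> ratv (c *\<^sub>R x)"
  unfolding ratv_def by auto

lemma rat_GS:
  fixes T :: "(real ^ 'n) set"
  assumes "finite T" "\<forall>t\<in>T. ratv t"
  shows "\<exists>B. finite B \<and> (\<forall>b\<in>B. ratv b) \<and> pairwise orthogonal B \<and> span B = span T"
  using assms
proof (induction T rule: finite_induct)
  case empty
  then show ?case by (rule_tac x="{}" in exI) simp
next
  case (insert a T)
  then obtain B where B: "finite B" "\<forall>b\<in>B. ratv b" "pairwise orthogonal B" "span B = span T"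
    by auto
  define a' where "a' = a - (\<Sum>b\<in>B. (b \<bullet> a / (b \<bullet> b)) *\<^sub>R b)"
  have "ratv a'" unfolding a'_def using B insert.prems
    by (auto intro!: ratv_diff ratv_sum ratv_scale Rats_divide inner_rat)
  moreover have "pairwise orthogonal (insert a' B)"
    by (rule pairwise_orthogonal_insert[OF B(3)])
       (simp add: a'_def Gram_Schmidt_step B(3) orthogonal_commute span_base)
  moreover have "span (insert a' B) = span (insert a T)"
  proof -
    have "span (insert a' B) = span (insert a B)"
      unfolding a'_def
      by (simp add: span_neg span_sum span_base span_mul eq_span_insert_eq)
    also have "\<dots> = span (insert a T)" using B(4) by (simp add: span_insert)
    finally show ?thesis .
  qed
  ultimately show ?case using B by (rule_tac x="insert a' B" in exI) auto
qed

lemma common_denom: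
  fixes q :: "real ^ 'n"
  assumes "ratv q"
  shows "\<exists>N::int. N > 0 \<and> (\<forall>i. \<exists>z::int. of_int N * q$i = of_int z)"
proof -
  have "\<forall>i. \<exists>b::int. b > 0 \<and> (\<exists>a::int. q$i = of_int a / of_int b)"
    using assms unfolding ratv_def by (metis Rats_cases')
  then obtain b a where ba: "\<And>i. b i > (0::int) \<and> q$i = of_int (a i) / of_int (b i)" by metis
  define N where "N = (\<Prod>i\<in>UNIV. b i)"
  have "N > 0" unfolding N_def using ba by (simp add: prod_pos)
  moreover have "\<exists>z::int. of_int N * q$i = of_int z" for i
  proof -
    have "N = b i * (\<Prod>j\<in>UNIV - {i}. b j)" unfolding N_def
      by (simp add: prod.remove)
    hence "of_int N * q$i = of_int ((\<Prod>j\<in>UNIV - {i}. b j) * a i)"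
      using ba[of i] by simp
    then show ?thesis by blast
  qed
  ultimately show ?thesis by blast
qed

definition projQ :: "(real ^ 'n) set \<Rightarrow> real ^ 'n \<Rightarrow> real ^ 'n" where
  "projQ B x = x - (\<Sum>b\<in>B. (b \<bullet> x / (b \<bullet> b)) *\<^sub>R b)"

lemma projQ_fix:
  assumes "\<And>b. b \<in> B \<Longrightarrow> b \<bullet> y = 0" shows "projQ B y = y"
proof -
  have "(\<Sum>b\<in>B. (b \<bullet> y / (b \<bullet> b)) *\<^sub>R b) = 0"
    by (rule sum.neutral) (simp add: assms)
  thus ?thesis unfolding projQ_def by simp
qed

lemma projQ_orth: "pairwise orthogonal B \<Longrightarrow> r \<in> span B \<Longrightarrow> r \<bullet> projQ B x = 0"
  unfolding projQ_def using Gram_Schmidt_step orthogonal_def by blast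

lemma projQ_rat: "finite B \<Longrightarrow> \<forall>b\<in>B. ratv b \<Longrightarrow> ratv x \<Longrightarrow> ratv (projQ B x)"
  unfolding projQ_def by (auto intro!: ratv_diff ratv_sum ratv_scale Rats_divide inner_rat)

lemma projQ_cont: "continuous (at y) (projQ B)"
proof -
  have eq: "projQ B = (\<lambda>x. x - (\<Sum>b\<in>B. (inverse (b \<bullet> b) * (b \<bullet> x)) *\<^sub>R b))"
    by (auto simp: projQ_def fun_eq_iff divide_inverse mult.commute)
  show ?thesis unfolding eq by (intro continuous_intros)
qed

lemma padic_vec_add: "p > 0 \<Longrightarrow> padic_vec p x \<Longrightarrow> padic_vec p y \<Longrightarrow> padic_vec p (x + y)"
  unfolding padic_vec_def by (auto intro: padic_add)

lemma lemmaG: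
  fixes r :: "'k \<Rightarrow> real ^ 'n"
  assumes p: "p \<ge> 2" and F: "finite F" and rat: "\<forall>i\<in>F. ratv (r i)"
    and x0: "padic_vec p x0" "\<forall>i\<in>F. r i \<bullet> x0 = c i"
  shows "{x. \<forall>i\<in>F. r i \<bullet> x = c i} \<subseteq> closure {x\<in>{x. \<forall>i\<in>F. r i \<bullet> x = c i}. padic_vec p x}"
proof
  fix x assume x: "x \<in> {x. \<forall>i\<in>F. r i \<bullet> x = c i}"
  obtain B where B: "finite B" "\<forall>b\<in>B. ratv b" "pairwise orthogonal B" "span B = span (r ` F)"
    using rat_GS[of "r ` F"] F rat by auto
  define y where "y = x - x0"
  have yL: "r i \<bullet> y = 0" if "i \<in> F" for i using x x0 that by (simp add: y_def inner_diff_right)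
  have "b \<bullet> y = 0" if "b \<in> B" for b
  proof -
    have "b \<in> span (r ` F)" using B(4) that span_base by blast
    moreover have "\<And>z. z \<in> r ` F \<Longrightarrow> orthogonal y z" using yL by (auto simp: orthogonal_def inner_commute)
    ultimately have "orthogonal y b" using orthogonal_to_span by blast
    thus ?thesis by (simp add: orthogonal_def inner_commute)
  qed
  hence Qy: "projQ B y = y" by (rule projQ_fix)
  show "x \<in> closure {x\<in>{x. \<forall>i\<in>F. r i \<bullet> x = c i}. padic_vec p x}"
    unfolding closure_approachable
  proof (intro allI impI)
    fix e :: real assume e: "e > 0"
    obtain d where d: "d > 0" "\<And>z. dist z y < d \<Longrightarrow> dist (projQ B z) (projQ B y) < e/2"
      using projQ_cont[of y B] e unfolding continuous_at_eps_delta
      by (metis half_gt_zero)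
    obtain z where z: "padic_vec p z" "dist z y < d" using padic_vec_dense[OF p d(1)] by blast
    define q where "q = projQ B z"
    have qy: "dist q y < e/2" using d(2)[OF z(2)] Qy by (simp add: q_def)
    have "ratv z"
    proof -
      have "padic_rat p t \<Longrightarrow> t \<in> \<rat>" for t unfolding padic_rat_def by auto
      thus ?thesis using z(1) unfolding padic_vec_def ratv_def by auto
    qed
    hence qrat: "ratv q" unfolding q_def using projQ_rat B by blast
    have qL: "r i \<bullet> q = 0" if "i \<in> F" for i
      unfolding q_def using projQ_orth[OF B(3)] B(4) that span_base by blast
    obtain N :: int where N: "N > 0" "\<And>i. \<exists>a::int. of_int N * q$i = of_int a"
      using common_denom[OF qrat] by blast
    define M where "M = real_of_int N * (norm q + 1)"
    have M: "M > 0" using N unfolding M_def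
      by (intro mult_pos_pos) (auto intro: add_nonneg_pos)
    obtain t where t: "padic_rat p t" "\<bar>t - 1 / of_int N\<bar> < e / (2 * M)"
      using padic_dense[OF p, of "e / (2*M)" "1 / of_int N"] e M by auto
    define w where "w = (t * of_int N) *\<^sub>R q"
    have wL: "r i \<bullet> w = 0" if "i \<in> F" for i using qL[OF that] by (simp add: w_def)
    have wp: "padic_vec p w" unfolding padic_vec_def
    proof
      fix i
      obtain a :: int where "of_int N * q$i = of_int a" using N(2) by blast
      hence "w $ i = t * of_int a" by (simp add: w_def)
      thus "padic_rat p (w $ i)" using padic_mult[OF t(1) padic_int] by simp
    qed
    have "w - q = (t * of_int N - 1) *\<^sub>R q" by (simp add: w_def scaleR_diff_left)
    hence "dist w q = \<bar>t * of_int N - 1\<bar> * norm q"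
      by (simp add: dist_norm)
    also have "\<bar>t * of_int N - 1\<bar> = of_int N * \<bar>t - 1 / of_int N\<bar>"
      using N(1) by (simp add: field_simps abs_mult[symmetric])
    also have "of_int N * \<bar>t - 1 / of_int N\<bar> * norm q \<le> of_int N * (e / (2*M)) * (norm q + 1)"
    proof (rule mult_mono)
      show "of_int N * \<bar>t - 1 / of_int N\<bar> \<le> of_int N * (e / (2*M))"
      proof (rule mult_left_mono)
        show "\<bar>t - 1 / of_int N\<bar> \<le> e / (2*M)" using t(2) by (rule less_imp_le)
        show "0 \<le> real_of_int N" using N(1) by simp
      qed
      show "0 \<le> of_int N * (e / (2*M))" using N(1) e M by (intro mult_nonneg_nonneg divide_nonneg_nonneg) simp_all
      show "norm q \<le> norm q + 1" by simp
      show "0 \<le> norm q" by simp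
    qed
    also have "\<dots> = e / 2"
    proof -
      have "of_int N * (e / (2*M)) * (norm q + 1) = (e / (2*M)) * M" by (simp add: M_def)
      also have "\<dots> = e / 2" using M by simp
      finally show ?thesis .
    qed
    finally have wq: "dist w q \<le> e / 2" .
    have "dist w y < e" using wq qy dist_triangle[of w y q] by linarith
    moreover have "x0 + w \<in> {x\<in>{x. \<forall>i\<in>F. r i \<bullet> x = c i}. padic_vec p x}"
    proof (intro CollectI conjI ballI)
      show "padic_vec p (x0 + w)" using padic_vec_add[OF _ x0(1) wp] p by simp
      fix i assume "i \<in> F"
      thus "r i \<bullet> (x0 + w) = c i" using x0(2) wL by (simp add: inner_add_right)
    qed
    moreover have "dist (x0 + w) x = dist w y" by (simp add: y_def dist_norm algebra_simps)
    ultimately show "\<exists>x'\<in>{x\<in>{x. \<forall>i\<in>F. r i \<bullet> x = c i}. padic_vec p x}. dist x' x < e" by (intro bexI[of _ "x0 + w"]) simp_all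
  qed
qed


lemma part1:
  fixes A :: "int ^ 'n ^ 'm" and b :: "int ^ 'm"
  assumes p: "p \<ge> 2"
  shows "(let S = {x :: real ^ 'n. int_mat_to_real A *v x = int_vec_to_real b} in
           (\<exists>x\<in>S. padic_vec p x) \<longrightarrow> S \<subseteq> closure {x\<in>S. padic_vec p x})"
proof -
  define r where "r = (\<lambda>i. int_mat_to_real A $ i)"
  define c where "c = (\<lambda>i. real_of_int (b $ i))"
  have eq: "{x :: real ^ 'n. int_mat_to_real A *v x = int_vec_to_real b} = {x. \<forall>i\<in>UNIV. r i \<bullet> x = c i}"
    by (auto simp: vec_eq_iff matrix_vector_mul_component r_def c_def int_vec_to_real_def)
  have rat: "\<forall>i\<in>UNIV. ratv (r i)" by (simp add: r_def ratv_def int_mat_to_real_def)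
  show ?thesis unfolding Let_def eq
  proof
    assume "\<exists>x\<in>{x. \<forall>i\<in>UNIV. r i \<bullet> x = c i}. padic_vec p x"
    then obtain x0 where "padic_vec p x0" "\<forall>i\<in>UNIV. r i \<bullet> x0 = c i" by blast
    from lemmaG[OF p finite_class.finite_UNIV rat this] show "{x. \<forall>i\<in>UNIV. r i \<bullet> x = c i} \<subseteq> closure {x\<in>{x. \<forall>i\<in>UNIV. r i \<bullet> x = c i}. padic_vec p x}" .
  qed
qed

lemma part2:
  fixes C :: "real ^ 'n ^ 'k" and d :: "real ^ 'k"
  assumes p: "p \<ge> 2" and Crat: "\<forall>i j. C $ i $ j \<in> \<rat>" and ne: "polyhedron C d \<noteq> {}"
    and z: "z \<in> affine hull (polyhedron C d)" "padic_vec p z"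
  shows "\<exists>x\<in>polyhedron C d. padic_vec p x"
proof -
  define P where "P = polyhedron C d"
  have Pdef: "P = {x. \<forall>i. C $ i \<bullet> x \<le> d $ i}"
    by (simp add: P_def polyhedron_def matrix_vector_mul_component)
  define I where "I = {i. \<forall>x\<in>P. C $ i \<bullet> x = d $ i}"
  define E where "E = {x. \<forall>i\<in>I. C $ i \<bullet> x = d $ i}"
  have "affine E" unfolding E_def affine_def
    by (auto simp: inner_add_right algebra_simps simp flip: distrib_right)
  moreover have "P \<subseteq> E" unfolding E_def I_def by auto
  ultimately have "affine hull P \<subseteq> E" by (rule hull_minimal[rotated])
  hence zE: "z \<in> E" using z(1) unfolding P_def by blast
  have dense: "E \<subseteq> closure {x\<in>E. padic_vec p x}"
    unfolding E_def
    by (rule lemmaG[OF p finite_subset[OF subset_UNIV finite_class.finite_UNIV]])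
       (use Crat zE z(2) in \<open>auto simp: ratv_def E_def\<close>)
  have convP: "convex P" unfolding Pdef
  proof -
    have "{x. \<forall>i. C $ i \<bullet> x \<le> d $ i} = (\<Inter>i. {x. C $ i \<bullet> x \<le> d $ i})" by auto
    thus "convex {x. \<forall>i. C $ i \<bullet> x \<le> d $ i}" by (simp add: convex_INT convex_halfspace_le)
  qed
  have Pne: "P \<noteq> {}" using ne by (simp add: P_def)
  obtain xs where xs: "xs \<in> rel_interior P" using rel_interior_eq_empty[OF convP] Pne by blast
  have xsP: "xs \<in> P" using xs rel_interior_subset by blast
  have strict: "C $ i \<bullet> xs < d $ i" if "i \<notin> I" for i
  proof -
    obtain y where y: "y \<in> P" "C $ i \<bullet> y \<noteq> d $ i" using \<open>i \<notin> I\<close> unfolding I_def by blast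
    have yl: "C $ i \<bullet> y < d $ i" proof -
      have "C $ i \<bullet> y \<le> d $ i" using y(1) unfolding Pdef by blast
      thus ?thesis using y(2) by linarith
    qed
    obtain e where e: "e > 1" "(1 - e) *\<^sub>R y + e *\<^sub>R xs \<in> P"
      using convex_rel_interior_iff[OF convP Pne] xs y(1) by blast
    define w where "w = (1 - e) *\<^sub>R y + e *\<^sub>R xs"
    have wl: "C $ i \<bullet> w \<le> d $ i" using e(2) unfolding Pdef w_def by blast
    have "xs = (1 / e) *\<^sub>R w + (1 - 1 / e) *\<^sub>R y"
      using e(1) by (simp add: w_def algebra_simps scaleR_diff_left)
    hence "C $ i \<bullet> xs = (1 / e) * (C $ i \<bullet> w) + (1 - 1 / e) * (C $ i \<bullet> y)"
      by (metis inner_add_right inner_scaleR_right)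
    also have "\<dots> < (1 / e) * d $ i + (1 - 1 / e) * d $ i"
    proof (rule add_le_less_mono)
      show "1 / e * (C $ i \<bullet> w) \<le> 1 / e * d $ i" 
      proof (rule mult_left_mono[OF wl])
        show "0 \<le> 1 / e" using e(1) by simp
      qed
      show "(1 - 1 / e) * (C $ i \<bullet> y) < (1 - 1 / e) * d $ i" using yl e(1)
        by (intro mult_strict_left_mono) auto
    qed
    also have "\<dots> = d $ i" by (simp add: algebra_simps)
    finally show ?thesis .
  qed
  define U where "U = (\<Inter>i\<in>-I. {x. C $ i \<bullet> x < d $ i})"
  have "open U" unfolding U_def
  proof (rule open_INT)
    show "finite (- I)" by simp
    show "\<forall>i\<in>- I. open {x. C $ i \<bullet> x < d $ i}" by (simp add: open_halfspace_lt)
  qed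
  moreover have "xs \<in> U" using strict by (simp add: U_def)
  moreover have "xs \<in> closure {x\<in>E. padic_vec p x}" using dense xsP \<open>P \<subseteq> E\<close> by blast
  ultimately have "{x\<in>E. padic_vec p x} \<inter> U \<noteq> {}"
    using closure_iff_nhds_not_empty[of xs "{x\<in>E. padic_vec p x}"] by blast
  then obtain x where x: "x \<in> U" "x \<in> E" "padic_vec p x" by blast
  have "x \<in> P" unfolding Pdef
  proof (intro CollectI allI)
    fix i show "C $ i \<bullet> x \<le> d $ i"
    proof (cases "i \<in> I")
      case True thus ?thesis using x(2) by (simp add: E_def)
    next
      case False
      hence "C $ i \<bullet> x < d $ i" using x(1) by (simp add: U_def)
      thus ?thesis by simp
    qed
  qed
  thus ?thesis using x(3) by (auto simp: P_def)
qed

theorem lemma2p2: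
  fixes p :: nat
    and A :: "int ^ 'n ^ 'm" and b :: "int ^ 'm"
  assumes "prime p"
  shows "(let S = {x :: real ^ 'n. int_mat_to_real A *v x = int_vec_to_real b} in
           (\<exists>x\<in>S. padic_vec p x) \<longrightarrow> S \<subseteq> closure {x\<in>S. padic_vec p x})
         \<and> (\<forall>(C :: real ^ 'n ^ 'k) (d :: real ^ 'k).
              (\<forall>i j. C $ i $ j \<in> \<rat>) \<longrightarrow> (\<forall>i. d $ i \<in> \<rat>) \<longrightarrow>
              polyhedron C d \<noteq> {} \<longrightarrow>
              ((\<exists>x\<in>polyhedron C d. padic_vec p x) \<longleftrightarrow>
               (\<exists>x\<in>affine hull (polyhedron C d). padic_vec p x)))"
  proof -
  have p: "p \<ge> 2" using assms prime_ge_2_nat by blast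
  show ?thesis
  proof (rule conjI, goal_cases)
    show "let S = {x :: real ^ 'n. int_mat_to_real A *v x = int_vec_to_real b} in
           (\<exists>x\<in>S. padic_vec p x) \<longrightarrow> S \<subseteq> closure {x\<in>S. padic_vec p x}"
      by (rule part1[OF p])
  next
    case 2
    show ?case
    proof (intro allI impI)
    fix C :: "real ^ 'n ^ 'k" and d :: "real ^ 'k"
    assume C: "\<forall>i j. C $ i $ j \<in> \<rat>" and "\<forall>i. d $ i \<in> \<rat>" and ne: "polyhedron C d \<noteq> {}"
    show "(\<exists>x\<in>polyhedron C d. padic_vec p x) \<longleftrightarrow> (\<exists>x\<in>affine hull (polyhedron C d). padic_vec p x)"
    proof
      assume "\<exists>x\<in>polyhedron C d. padic_vec p x"
      then obtain x where x: "x \<in> polyhedron C d" "padic_vec p x" by blast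
      have "x \<in> affine hull (polyhedron C d)" using hull_subset[of "polyhedron C d" affine] x(1) by (rule subsetD)
      thus "\<exists>x\<in>affine hull (polyhedron C d). padic_vec p x" using x(2) by (rule bexI[rotated])
    next
      assume "\<exists>x\<in>affine hull (polyhedron C d). padic_vec p x"
      then obtain z where "z \<in> affine hull (polyhedron C d)" "padic_vec p z" by blast
      from part2[OF p C ne this] show "\<exists>x\<in>polyhedron C d. padic_vec p x" .
    qed
    qed
  qed
qed

end
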